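(* Consider a bipartite experiment where Alice chooses $x\in\{0,1\}$ and obtains $a\in\{\pm1\}$ with probability $\pi_{a|x}:=p(a|x)$, and conditioned on $(a,x)$ Bob's system is in the qubit state $\rho_{a|x}=\tfrac12(I+\mathbf s_{a|x}\cdot\boldsymbol\sigma)$ with Bloch vector $\mathbf s_{a|x}\in\mathbb R^3$, $\|\mathbf s_{a|x}\|\le1$. Bob chooses $y\in\{0,1\}$ and performs the binary projective measurement with observable $B_y=\mathbf b_y\cdot\boldsymbol\sigma$, $\|\mathbf b_y\|=1$, obtaining $b\in\{\pm1\}$, so that $p(a,b|x,y)=\pi_{a|x}\,\mathrm{Tr}\big(\rho_{a|x}\tfrac{I+bB_y}{2}\big)$. Let $E_{xy}=\sum_{a,b=\pm1}ab\,p(a,b|x,y)$ and $S_{\mathrm{CHSH}}=E_{00}+E_{01}+E_{10}-E_{11}$. For a pair of qubit states let the SWAP-test pass probability be $p(\mathsf{pass}|\rho,\sigma)=\tfrac12(1+\mathrm{Tr}(\rho\sigma))$, and define $$p_{\mathrm{pur}}^{\pm|x}=p(\mathsf{pass}|\rho_{\pm|x},\rho_{\pm|x}),\qquad p_{\mathrm{ov}}^{x}=p(\mathsf{pass}|\rho_{+|x},\rho_{-|x}),$$ $$\widetilde R_x^2:=2\Big[\pi_{+|x}^2(2p_{\mathrm{pur}}^{+|x}-1)+\pi_{-|x}^2(2p_{\mathrm{pur}}^{-|x}-1)-2\pi_{+|x}\pi_{-|x}(2p_{\mathrm{ov}}^{x}-1)\Big]-(\pi_{+|x}-\pi_{-|x})^2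 .$$ Then $$S_{\mathrm{CHSH}}\le 2\sqrt{\widetilde R_0^2+\widetilde R_1^2}.$$
   Context: $\boldsymbol\sigma=(\sigma_x,\sigma_y,\sigma_z)$ is the vector of Pauli matrices. $\widetilde R_x^2$ is called the weighted operational separation parameter of Bob's two conditional preparations at Alice's setting $x$. *)

theory Defs
  imports "HOL-Analysis.Analysis"
begin

definition pauli_x :: "complex^2^2" where
  "pauli_x = (\<chi> i j. if i \<noteq> j then 1 else 0)"

definition pauli_y :: "complex^2^2" where
  "pauli_y = (\<chi> i j. if i = 1 \<and> j = 2 then - \<i> else if i = 2 \<and> j = 1 then \<i> else 0)"

definition pauli_z :: "complex^2^2" where
  "pauli_z = (\<chi> i j. if i = j then (if i = 1 then 1 else -1) else 0)"

definition dot_sigma :: "real^3 \<Rightarrow> complex^2^2" where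
  "dot_sigma v = (v$1) *\<^sub>R pauli_x + (v$2) *\<^sub>R pauli_y + (v$3) *\<^sub>R pauli_z"

definition bloch_state :: "real^3 \<Rightarrow> complex^2^2" where
  "bloch_state s = (1/2) *\<^sub>R (mat 1 + dot_sigma s)"

text \<open>SWAP-test pass probability (1 + Tr(rho sigma))/2 (the trace is real for
  Hermitian matrices; we take its real part).\<close>
definition swap_pass :: "complex^2^2 \<Rightarrow> complex^2^2 \<Rightarrow> real" where
  "swap_pass \<rho> \<sigma> = (1 + Re (trace (\<rho> ** \<sigma>))) / 2"

text \<open>Outcomes a, b are the reals 1 and -1; settings x, y are the naturals 0, 1.
  pi a x = p(a|x); s a x = Bloch vector of Bob's conditional state; bv y = Bob's
  measurement direction.\<close>

definition joint_prob ::
  "(real \<Rightarrow> nat \<Rightarrow> real) \<Rightarrow> (real \<Rightarrow> nat \<Rightarrow> real^3) \<Rightarrow> (nat \<Rightarrow> real^3)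
     \<Rightarrow> real \<Rightarrow> real \<Rightarrow> nat \<Rightarrow> nat \<Rightarrow> real" where
  "joint_prob \<pi> s bv a b x y =
     \<pi> a x * Re (trace (bloch_state (s a x) ** ((1/2) *\<^sub>R (mat 1 + b *\<^sub>R dot_sigma (bv y)))))"

definition correlator ::
  "(real \<Rightarrow> nat \<Rightarrow> real) \<Rightarrow> (real \<Rightarrow> nat \<Rightarrow> real^3) \<Rightarrow> (nat \<Rightarrow> real^3) \<Rightarrow> nat \<Rightarrow> nat \<Rightarrow> real" where
  "correlator \<pi> s bv x y =
     (\<Sum>a\<in>{1, -1}. \<Sum>b\<in>{1, -1}. a * b * joint_prob \<pi> s bv a b x y)"

definition S_CHSH ::
  "(real \<Rightarrow> nat \<Rightarrow> real) \<Rightarrow> (real \<Rightarrow> nat \<Rightarrow> real^3) \<Rightarrow> (nat \<Rightarrow> real^3) \<Rightarrow> real" where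
  "S_CHSH \<pi> s bv = correlator \<pi> s bv 0 0 + correlator \<pi> s bv 0 1
                    + correlator \<pi> s bv 1 0 - correlator \<pi> s bv 1 1"

definition R_tilde_sq ::
  "(real \<Rightarrow> nat \<Rightarrow> real) \<Rightarrow> (real \<Rightarrow> nat \<Rightarrow> real^3) \<Rightarrow> nat \<Rightarrow> real" where
  "R_tilde_sq \<pi> s x =
     (let rp = bloch_state (s 1 x); rm = bloch_state (s (-1) x);
          ppp = swap_pass rp rp; ppm = swap_pass rm rm; pov = swap_pass rp rm
      in 2 * ((\<pi> 1 x)\<^sup>2 * (2 * ppp - 1) + (\<pi> (-1) x)\<^sup>2 * (2 * ppm - 1)
              - 2 * \<pi> 1 x * \<pi> (-1) x * (2 * pov - 1))
         - (\<pi> 1 x - \<pi> (-1) x)\<^sup>2)"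

end

theory Submission
  imports Defs
begin

lemma trL: "Re (trace (bloch_state s ** ((1/2) *\<^sub>R (mat 1 + dot_sigma t)))) = (1 + s \<bullet> t)/2"
  by (simp add: trace_def matrix_matrix_mult_def sum_2 bloch_state_def dot_sigma_def pauli_x_def pauli_y_def pauli_z_def mat_def inner_vec_def sum_3 algebra_simps)

lemma dot_sigma_scale: "dot_sigma (c *\<^sub>R v) = c *\<^sub>R dot_sigma v"
  by (simp add: dot_sigma_def scaleR_add_right)

lemma joint: "joint_prob \<pi> s bv a b x y = \<pi> a x * (1 + b * (s a x \<bullet> bv y)) / 2"
proof -
  have "mat 1 + b *\<^sub>R dot_sigma (bv y) = mat 1 + dot_sigma (b *\<^sub>R bv y)"
    by (simp add: dot_sigma_scale)
  then show ?thesis unfolding joint_prob_def by (simp add: trL)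
qed

lemma swapL: "2 * swap_pass (bloch_state s) (bloch_state t) - 1 = (1 + s \<bullet> t)/2"
proof -
  have "bloch_state t = (1/2) *\<^sub>R (mat 1 + dot_sigma t)" by (simp add: bloch_state_def)
  then show ?thesis unfolding swap_pass_def by (simp add: trL)
qed

lemma corr: "correlator \<pi> s bv x y = (\<pi> 1 x *\<^sub>R s 1 x - \<pi> (-1) x *\<^sub>R s (-1) x) \<bullet> bv y"
  unfolding correlator_def by (simp add: joint inner_diff_left field_simps)

lemma Rt: "R_tilde_sq \<pi> s x = (norm (\<pi> 1 x *\<^sub>R s 1 x - \<pi> (-1) x *\<^sub>R s (-1) x))\<^sup>2"
proof -
  have "(norm (\<pi> 1 x *\<^sub>R s 1 x - \<pi> (-1) x *\<^sub>R s (-1) x))\<^sup>2 =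
     (\<pi> 1 x)\<^sup>2 * (s 1 x \<bullet> s 1 x) + (\<pi> (-1) x)\<^sup>2 * (s (-1) x \<bullet> s (-1) x) - 2 * \<pi> 1 x * \<pi> (-1) x * (s 1 x \<bullet> s (-1) x)"
    unfolding power2_norm_eq_inner
    by (simp add: inner_diff_left inner_diff_right inner_commute algebra_simps power2_eq_square)
  moreover have "R_tilde_sq \<pi> s x = 2 * ((\<pi> 1 x)\<^sup>2 * ((1 + s 1 x \<bullet> s 1 x)/2) + (\<pi> (-1) x)\<^sup>2 * ((1 + s (-1) x \<bullet> s (-1) x)/2)
     - 2 * \<pi> 1 x * \<pi> (-1) x * ((1 + s 1 x \<bullet> s (-1) x)/2)) - (\<pi> 1 x - \<pi> (-1) x)\<^sup>2"
    unfolding R_tilde_sq_def Let_def swapL ..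
  ultimately show ?thesis
    by (simp add: field_simps power2_eq_square)
qed

lemma cdl: fixes a b :: "real^3" assumes "norm a = 1" "norm b = 1" shows "(norm (a+b))\<^sup>2 + (norm (a-b))\<^sup>2 = 4"
  using assms unfolding power2_norm_eq_inner
  by (simp add: inner_add_left inner_add_right inner_diff_left inner_diff_right
        inner_commute norm_eq_sqrt_inner)

lemma cs2: fixes a b c d :: real assumes "a \<ge> 0" "b \<ge> 0" "c \<ge> 0" "d \<ge> 0"
  shows "a*c + b*d \<le> sqrt (a\<^sup>2 + b\<^sup>2) * sqrt (c\<^sup>2 + d\<^sup>2)"
proof -
  have e: "(a*c + b*d)\<^sup>2 = (a\<^sup>2 + b\<^sup>2) * (c\<^sup>2 + d\<^sup>2) - (a*d - b*c)\<^sup>2"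
    by (simp add: power2_eq_square algebra_simps)
  have "(a*c + b*d)\<^sup>2 \<le> (a\<^sup>2 + b\<^sup>2) * (c\<^sup>2 + d\<^sup>2)"
    unfolding e using zero_le_power2[of "a*d - b*c"] by linarith
  then have "a*c + b*d \<le> sqrt ((a\<^sup>2 + b\<^sup>2) * (c\<^sup>2 + d\<^sup>2))"
    using real_le_rsqrt by blast
  then show ?thesis by (simp add: real_sqrt_mult)
qed

theorem theorem2:
  fixes \<pi> :: "real \<Rightarrow> nat \<Rightarrow> real"
    and s :: "real \<Rightarrow> nat \<Rightarrow> real^3"
    and bv :: "nat \<Rightarrow> real^3"
  assumes pi_nonneg: "\<And>a x. a \<in> {1, -1} \<Longrightarrow> x \<in> {0, 1} \<Longrightarrow> \<pi> a x \<ge> 0"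
    and pi_sum: "\<And>x. x \<in> {0, 1} \<Longrightarrow> \<pi> 1 x + \<pi> (-1) x = 1"
    and bloch: "\<And>a x. a \<in> {1, -1} \<Longrightarrow> x \<in> {0, 1} \<Longrightarrow> norm (s a x) \<le> 1"
    and meas: "\<And>y. y \<in> {0, 1} \<Longrightarrow> norm (bv y) = 1"
  shows "S_CHSH \<pi> s bv \<le> 2 * sqrt (R_tilde_sq \<pi> s 0 + R_tilde_sq \<pi> s 1)"
proof -
  define v0 where "v0 = \<pi> 1 0 *\<^sub>R s 1 0 - \<pi> (-1) 0 *\<^sub>R s (-1) 0"
  define v1 where "v1 = \<pi> 1 1 *\<^sub>R s 1 1 - \<pi> (-1) 1 *\<^sub>R s (-1) 1"
  define c where "c = bv 0 + bv 1"
  define d where "d = bv 0 - bv 1"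
  have S: "S_CHSH \<pi> s bv = v0 \<bullet> c + v1 \<bullet> d"
    unfolding S_CHSH_def corr v0_def v1_def c_def d_def
    by (simp add: inner_add_right inner_diff_right)
  have R: "R_tilde_sq \<pi> s 0 + R_tilde_sq \<pi> s 1 = (norm v0)\<^sup>2 + (norm v1)\<^sup>2"
    unfolding Rt v0_def v1_def by simp
  have n0: "norm (bv 0) = 1" and n1: "norm (bv 1) = 1" using meas by auto
  have cd: "(norm c)\<^sup>2 + (norm d)\<^sup>2 = 4"
    unfolding c_def d_def using n0 n1 by (rule cdl)
  have "v0 \<bullet> c + v1 \<bullet> d \<le> norm v0 * norm c + norm v1 * norm d"
    using Cauchy_Schwarz_ineq2[of v0 c] Cauchy_Schwarz_ineq2[of v1 d] by auto
  also have "\<dots> \<le> sqrt ((norm v0)\<^sup>2 + (norm v1)\<^sup>2) * sqrt ((norm c)\<^sup>2 + (norm d)\<^sup>2)"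
    by (rule cs2) auto
  also have "\<dots> = 2 * sqrt ((norm v0)\<^sup>2 + (norm v1)\<^sup>2)"
    using cd by simp
  finally show ?thesis using S R by simp
qed

end
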